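(* There is an absolute constant $c>0$ such that for every $n,m\ge1$, every sequence $S\in[n]^m$ and every initial BST $T$ on $[n]$, $$\mathbb E_\pi\bigl[\mathrm{MTR}_T(\pi(S))\bigr]\le c\Bigl(\mathit{WS}(S)+m+\sum_{i=1}^n d_T(i)\Bigr),$$ where the expectation is over a uniformly random permutation $\pi$ of $[n]$.
   Context: For $S=(s_1,\dots,s_m)$ and a permutation $\pi$ of $[n]$, let $\pi(S)=(\pi(s_1),\dots,\pi(s_m))$. Move-to-root: each accessed key $x$ is found by searching from the root, at cost equal to the number of nodes on the root-to-$x$ path, i.e. $d(x)+1$ with $d$ the current depth (root at depth $0$). Then $x$ is rotated to the root by single rotations. $\mathrm{MTR}_T(S)$ is the total cost of Move-to-root on $S$ starting from the tree $T$, and $d_T(i)$ is the depth of $i$ in $T$. Working set bound: for $j\le m$, let $\rho(j)=\max\{k<j: s_k=s_j\}$, with $\rho(j)=0$ if there is no such $k$. Let $w_S(j)=\{s_i:\rho(j)<i\le j\}$. Then $\mathit{WS}(S)=\sum_{j=1}^m\log_2|w_S(j)|$. *)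

theory Defs
  imports Complex_Main "HOL-Library.Tree" "HOL-Combinatorics.Permutations"
begin

fun depth :: "nat \<Rightarrow> nat tree \<Rightarrow> nat" where
  "depth x Leaf = 0"
| "depth x (Node l y r) =
     (if x = y then 0 else if x < y then Suc (depth x l) else Suc (depth x r))"

fun mtr :: "nat \<Rightarrow> nat tree \<Rightarrow> nat tree" where
  "mtr x Leaf = Leaf"
| "mtr x (Node l y r) =
     (if x = y then Node l y r
      else if x < y then
        (case mtr x l of Leaf \<Rightarrow> Node l y r
         | Node a z b \<Rightarrow> Node a z (Node b y r))
      else
        (case mtr x r of Leaf \<Rightarrow> Node l y r
         | Node a z b \<Rightarrow> Node (Node l y a) z b))"

fun mtr_cost :: "nat tree \<Rightarrow> nat list \<Rightarrow> nat" where
  "mtr_cost T [] = 0"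
| "mtr_cost T (x # xs) = depth x T + 1 + mtr_cost (mtr x T) xs"

text \<open>Working-set bound; positions are 1-based: s_j = S ! (j - 1).\<close>
definition rho :: "nat list \<Rightarrow> nat \<Rightarrow> nat" where
  "rho S j = (if \<exists>k. 1 \<le> k \<and> k < j \<and> S ! (k - 1) = S ! (j - 1)
              then Max {k. 1 \<le> k \<and> k < j \<and> S ! (k - 1) = S ! (j - 1)} else 0)"

definition ws_set :: "nat list \<Rightarrow> nat \<Rightarrow> nat set" where
  "ws_set S j = {S ! (i - 1) | i. rho S j < i \<and> i \<le> j}"

definition WS :: "nat list \<Rightarrow> real" where
  "WS S = (\<Sum>j = 1..length S. log 2 (real (card (ws_set S j))))"

definition expected_mtr :: "nat \<Rightarrow> nat tree \<Rightarrow> nat list \<Rightarrow> real" where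
  "expected_mtr n T S =
     (\<Sum>\<pi> \<in> {\<pi>. \<pi> permutes {1..n}}. real (mtr_cost T (map \<pi> S)))
       / real (card {\<pi>. \<pi> permutes {1..n}})"

end

theory Submission
  imports Defs
begin

lemma set_mtr[simp]: "set_tree (mtr x t) = set_tree t"
proof (induction x t rule: mtr.induct)
  case (2 x l y r)
  show ?case
  proof (cases "x = y")
    case False
    show ?thesis
    proof (cases "x < y")
      case True
      then show ?thesis using 2(1)[OF False True] False by (cases "mtr x l") auto
    next
      case F: False
      then show ?thesis using 2(2)[OF False F] False by (cases "mtr x r") auto
    qed
  qed simp
qed simp

lemma mtr_root: "bst t \<Longrightarrow> x \<in> set_tree t \<Longrightarrow> \<exists>a b. mtr x t = Node a x b"
proof (induction x t rule: mtr.induct)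
  case (2 x l y r)
  show ?case
  proof (cases "x = y")
    case False
    show ?thesis
    proof (cases "x < y")
      case True
      hence "x \<in> set_tree l" using 2(3,4) False by auto
      then obtain a b where "mtr x l = Node a x b" using 2(1)[OF False True] 2(3) by auto
      then show ?thesis using False True by simp
    next
      case F: False
      hence "x \<in> set_tree r" using 2(3,4) False by auto
      then obtain a b where "mtr x r = Node a x b" using 2(2)[OF False F] 2(3) by auto
      then show ?thesis using False F by simp
    qed
  qed simp
qed simp


lemma bst_mtr: "bst t \<Longrightarrow> x \<in> set_tree t \<Longrightarrow> bst (mtr x t)"
proof (induction x t rule: mtr.induct)
  case (2 x l y r)
  show ?case
  proof (cases "x = y")
    case False
    show ?thesis
    proof (cases "x < y")
      case True
      hence xl: "x \<in> set_tree l" using 2(3,4) False by auto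
      have ih: "bst (mtr x l)" using 2(1)[OF False True] 2(3) xl by auto
      obtain a b where N: "mtr x l = Node a x b" using mtr_root[OF _ xl] 2(3) by auto
      have s: "set_tree a \<union> {x} \<union> set_tree b = set_tree l" using N set_mtr[of x l] by auto
      have ba: "bst a" "bst b" "\<forall>k\<in>set_tree a. k < x" "\<forall>k\<in>set_tree b. x < k" using ih N by auto
      have ly: "\<forall>k\<in>set_tree l. k < y" "\<forall>k\<in>set_tree r. y < k" "bst r" using 2(3) by auto
      have "bst (Node b y r)" using ba ly s by auto
      moreover have "\<forall>k\<in>set_tree (Node b y r). x < k" using ba ly True by auto
      ultimately have "bst (Node a x (Node b y r))" using ba by simp
      then show ?thesis using N False True by simp
    next
      case F: False
      hence xl: "x \<in> set_tree r" using 2(3,4) False by auto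
      have ih: "bst (mtr x r)" using 2(2)[OF False F] 2(3) xl by auto
      obtain a b where N: "mtr x r = Node a x b" using mtr_root[OF _ xl] 2(3) by auto
      have s: "set_tree a \<union> {x} \<union> set_tree b = set_tree r" using N set_mtr[of x r] by auto
      have ba: "bst a" "bst b" "\<forall>k\<in>set_tree a. k < x" "\<forall>k\<in>set_tree b. x < k" using ih N by auto
      have ly: "\<forall>k\<in>set_tree l. k < y" "\<forall>k\<in>set_tree r. y < k" "bst l" using 2(3) by auto
      have "bst (Node l y a)" using ba ly s by auto
      moreover have "\<forall>k\<in>set_tree (Node l y a). k < x" using ba ly F False by auto
      ultimately have "bst (Node (Node l y a) x b)" using ba by simp
      then show ?thesis using N False F by simp
    qed
  qed (use 2(3) in simp)
qed simp

fun hp :: "(nat \<Rightarrow> int) \<Rightarrow> nat tree \<Rightarrow> bool" where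
  "hp p Leaf = True"
| "hp p (Node l y r) = ((\<forall>k\<in>set_tree l. p k < p y) \<and> (\<forall>k\<in>set_tree r. p k < p y) \<and> hp p l \<and> hp p r)"

lemma hp_cong: "(\<And>k. k\<in>set_tree t \<Longrightarrow> p k = q k) \<Longrightarrow> hp p t = hp q t"
proof (induction t)
  case (Node l y r)
  have "hp p l = hp q l" "hp p r = hp q r" using Node by auto
  moreover have "(\<forall>k\<in>set_tree l. p k < p y) = (\<forall>k\<in>set_tree l. q k < q y)"
    using Node.prems by auto
  moreover have "(\<forall>k\<in>set_tree r. p k < p y) = (\<forall>k\<in>set_tree r. q k < q y)"
    using Node.prems by auto
  ultimately show ?case by simp
qed simp


lemma hp_mtr:
  assumes "bst t" "hp p t" "x \<in> set_tree t" "\<forall>k\<in>set_tree t. p k < c"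
  shows "hp (\<lambda>k. if k = x then c else p k) (mtr x t)"
  using assms
proof (induction x t rule: mtr.induct)
  case (2 x l y r)
  show ?case
  proof (cases "x = y")
    case True
    have xl: "x \<notin> set_tree l" "x \<notin> set_tree r" using 2(3) True by auto
    have "hp (\<lambda>k. if k = x then c else p k) l = hp p l" by (rule hp_cong) (use xl in auto)
    hence "hp (\<lambda>k. if k = x then c else p k) l" using 2(4) by simp
    moreover have "hp (\<lambda>k. if k = x then c else p k) r = hp p r" by (rule hp_cong) (use xl in auto)
    hence "hp (\<lambda>k. if k = x then c else p k) r" using 2(4) by simp
    moreover have "\<forall>k\<in>set_tree l. (\<lambda>k. if k = x then c else p k) k < c" using 2(6) xl by auto
    moreover have "\<forall>k\<in>set_tree r. (\<lambda>k. if k = x then c else p k) k < c" using 2(6) xl by auto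
    ultimately have "hp (\<lambda>k. if k = x then c else p k) (Node l y r)" using True by simp
    moreover have "mtr x (Node l y r) = Node l y r" using True by simp
    ultimately show ?thesis by (simp only:)
  next
    case False
    show ?thesis
    proof (cases "x < y")
      case True
      hence xl: "x \<in> set_tree l" using 2(3,5) False by auto
      have ih: "hp (\<lambda>k. if k = x then c else p k) (mtr x l)" using 2(1)[OF False True] 2(3,4,6) xl by auto
      obtain a b where Node: "mtr x l = Node a x b" using mtr_root[OF _ xl] 2(3) by auto
      have s: "set_tree a \<union> {x} \<union> set_tree b = set_tree l" using Node set_mtr[of x l] by auto
      have bl: "bst (mtr x l)" using 2(3) xl by (simp add: bst_mtr)
      with Node have xa: "x \<notin> set_tree a" "x \<notin> set_tree b" by auto
      have xr: "x \<notin> set_tree r" using 2(3) True by auto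
      have hr: "hp (\<lambda>k. if k = x then c else p k) r" using 2(4) xr by (subst hp_cong[of _ _ p]) auto
      have hb: "hp (\<lambda>k. if k = x then c else p k) (Node b y r)"
      proof -
        have "\<forall>k\<in>set_tree b \<union> set_tree r. (\<lambda>k. if k = x then c else p k) k < (\<lambda>k. if k = x then c else p k) y"
          using xa xr s 2(4) False by auto
        thus ?thesis using ih Node hr by simp
      qed
      have "\<forall>k\<in>set_tree a \<union> set_tree (Node b y r). (\<lambda>k. if k = x then c else p k) k < c"
        using xa xr s 2(6) False by auto
      hence "hp (\<lambda>k. if k = x then c else p k) (Node a x (Node b y r))"
        using ih Node hb by simp
      thus ?thesis using Node True False by simp
    next
      case False2: False
      hence xl: "x \<in> set_tree r" using 2(3,5) False by auto
      have ih: "hp (\<lambda>k. if k = x then c else p k) (mtr x r)" using 2(2)[OF False False2] 2(3,4,6) xl by auto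
      obtain a b where Node: "mtr x r = Node a x b" using mtr_root[OF _ xl] 2(3) by auto
      have s: "set_tree a \<union> {x} \<union> set_tree b = set_tree r" using Node set_mtr[of x r] by auto
      have bl: "bst (mtr x r)" using 2(3) xl by (simp add: bst_mtr)
      with Node have xa: "x \<notin> set_tree a" "x \<notin> set_tree b" by auto
      have xr: "x \<notin> set_tree l" using 2(3) False2 False by auto
      have hr: "hp (\<lambda>k. if k = x then c else p k) l" using 2(4) xr by (subst hp_cong[of _ _ p]) auto
      have hb: "hp (\<lambda>k. if k = x then c else p k) (Node l y a)"
      proof -
        have "\<forall>k\<in>set_tree l \<union> set_tree a. (\<lambda>k. if k = x then c else p k) k < (\<lambda>k. if k = x then c else p k) y"
          using xa xr s 2(4) False by auto
        thus ?thesis using ih Node hr by simp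
      qed
      have "\<forall>k\<in>set_tree (Node l y a) \<union> set_tree b. (\<lambda>k. if k = x then c else p k) k < c"
        using xa xr s 2(6) False by auto
      hence "hp (\<lambda>k. if k = x then c else p k) (Node (Node l y a) x b)"
        using ih Node hb by simp
      thus ?thesis using Node False2 False by simp
    qed
  qed
qed simp

lemma hp_shift: "hp (\<lambda>k. p k + c) t = hp p t"
  by (induction t) auto

lemma hp_depth: "bst T \<Longrightarrow> hp (\<lambda>k. - int (depth k T)) T"
proof (induction T)
  case (Node l y r)
  have hl: "hp (\<lambda>k. - int (depth k (Node l y r))) l"
  proof -
    have A: "hp (\<lambda>k. - int (depth k l) + (-1)) l" by (subst hp_shift) (use Node in auto)
    moreover have B: "\<And>k. k \<in> set_tree l \<Longrightarrow> - int (depth k (Node l y r)) = - int (depth k l) + (-1)"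
      using Node.prems by auto
    ultimately show ?thesis using hp_cong[of l "\<lambda>k. - int (depth k (Node l y r))" "\<lambda>k. - int (depth k l) + (-1)"] by simp
  qed
  have hr: "hp (\<lambda>k. - int (depth k (Node l y r))) r"
  proof -
    have A: "hp (\<lambda>k. - int (depth k r) + (-1)) r" by (subst hp_shift) (use Node in auto)
    moreover have B: "\<And>k. k \<in> set_tree r \<Longrightarrow> - int (depth k (Node l y r)) = - int (depth k r) + (-1)"
      using Node.prems by auto
    ultimately show ?thesis using hp_cong[of r "\<lambda>k. - int (depth k (Node l y r))" "\<lambda>k. - int (depth k r) + (-1)"] by simp
  qed
  have "\<forall>k\<in>set_tree l \<union> set_tree r. - int (depth k (Node l y r)) < - int (depth y (Node l y r))"
    using Node.prems by auto
  then show ?case using hl hr by simp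
qed simp

definition Q :: "(nat \<Rightarrow> int) \<Rightarrow> nat tree \<Rightarrow> nat \<Rightarrow> nat set" where
  "Q p t x = {y \<in> set_tree t. y \<noteq> x \<and> (\<forall>k\<in>set_tree t. min x y \<le> k \<and> k \<le> max x y \<and> k \<noteq> y \<longrightarrow> p k < p y)}"

lemma depth_Q: "bst t \<Longrightarrow> hp p t \<Longrightarrow> x \<in> set_tree t \<Longrightarrow> depth x t = card (Q p t x)"
proof (induction t)
  case (Node l y r)
  have fin: "finite (Q p t x)" for t unfolding Q_def by auto
  show ?case
  proof (cases "x = y")
    case True
    have "Q p (Node l y r) x = {}"
    proof (rule ccontr)
      assume "Q p (Node l y r) x \<noteq> {}"
      then obtain z where z: "z \<in> Q p (Node l y r) x" by auto
      hence "z \<in> set_tree l \<union> set_tree r" "z \<noteq> y" using True unfolding Q_def by auto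
      moreover have "p y < p z" using z True unfolding Q_def by fastforce
      moreover have "\<forall>k\<in>set_tree l \<union> set_tree r. p k < p y" using Node.prems(2) by (simp only: hp.simps) blast
      ultimately have "p z < p y" "p y < p z" by blast+
      thus False by simp
    qed
    then show ?thesis using True by simp
  next
    case False
    show ?thesis
    proof (cases "x < y")
      case True
      hence xl: "x \<in> set_tree l" using Node.prems False by auto
      have ih: "depth x l = card (Q p l x)" using Node xl by auto
      have eq: "Q p (Node l y r) x = insert y (Q p l x)"
      proof (rule set_eqI, rule iffI)
        fix z assume z: "z \<in> Q p (Node l y r) x"
        show "z \<in> insert y (Q p l x)"
        proof (cases "z \<in> set_tree l")
          case True
          have "\<forall>k\<in>set_tree l. min x z \<le> k \<and> k \<le> max x z \<and> k \<noteq> z \<longrightarrow> p k < p z"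
            using z unfolding Q_def by auto
          thus ?thesis using True z unfolding Q_def by auto
        next
          case F: False
          show ?thesis
          proof (rule ccontr)
            assume "z \<notin> insert y (Q p l x)"
            hence zr: "z \<in> set_tree r" "z \<noteq> y" using z F unfolding Q_def by auto
            hence "y < z" using Node.prems by auto
            hence "p y < p z" using z zr True unfolding Q_def by fastforce
            thus False using zr Node.prems by auto
          qed
        qed
      next
        fix z assume z: "z \<in> insert y (Q p l x)"
        show "z \<in> Q p (Node l y r) x"
        proof (cases "z = y")
          case True
          thus ?thesis using Node.prems False \<open>x < y\<close> unfolding Q_def by fastforce
        next
          case F: False
          hence zl: "z \<in> Q p l x" using z by auto
          hence zl': "z \<in> set_tree l" "z \<noteq> x" unfolding Q_def by auto
          have "z < y" "x < y" using zl' Node.prems True by auto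
          hence "\<forall>k\<in>set_tree (Node l y r). min x z \<le> k \<and> k \<le> max x z \<longrightarrow> k \<in> set_tree l"
            using Node.prems by fastforce
          thus ?thesis using zl unfolding Q_def by auto
        qed
      qed
      have "y \<notin> Q p l x" using Node.prems unfolding Q_def by auto
      then show ?thesis using eq ih True False fin by simp
    next
      case F2: False
      hence xl: "x \<in> set_tree r" using Node.prems False by auto
      have ih: "depth x r = card (Q p r x)" using Node xl by auto
      have eq: "Q p (Node l y r) x = insert y (Q p r x)"
      proof (rule set_eqI, rule iffI)
        fix z assume z: "z \<in> Q p (Node l y r) x"
        show "z \<in> insert y (Q p r x)"
        proof (cases "z \<in> set_tree r")
          case True
          have "\<forall>k\<in>set_tree r. min x z \<le> k \<and> k \<le> max x z \<and> k \<noteq> z \<longrightarrow> p k < p z"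
            using z unfolding Q_def by auto
          thus ?thesis using True z unfolding Q_def by auto
        next
          case F: False
          show ?thesis
          proof (rule ccontr)
            assume "z \<notin> insert y (Q p r x)"
            hence zr: "z \<in> set_tree l" "z \<noteq> y" using z F unfolding Q_def by auto
            hence "z < y" using Node.prems by auto
            hence "p y < p z" using z zr F2 False unfolding Q_def by fastforce
            thus False using zr Node.prems by auto
          qed
        qed
      next
        fix z assume z: "z \<in> insert y (Q p r x)"
        show "z \<in> Q p (Node l y r) x"
        proof (cases "z = y")
          case True
          thus ?thesis using Node.prems False F2 unfolding Q_def by fastforce
        next
          case F: False
          hence zl: "z \<in> Q p r x" using z by auto
          hence zl': "z \<in> set_tree r" "z \<noteq> x" unfolding Q_def by auto
          have "y < z" "y < x" using zl' Node.prems xl by auto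
          hence "\<forall>k\<in>set_tree (Node l y r). min x z \<le> k \<and> k \<le> max x z \<longrightarrow> k \<in> set_tree r"
            using Node.prems by fastforce
          thus ?thesis using zl unfolding Q_def by auto
        qed
      qed
      have "y \<notin> Q p r x" using Node.prems unfolding Q_def by auto
      then show ?thesis using eq ih F2 False fin by simp
    qed
  qed
qed simp

definition EvG :: "nat set \<Rightarrow> nat \<Rightarrow> nat \<Rightarrow> (nat \<Rightarrow> nat) \<Rightarrow> bool" where
  "EvG A x u \<pi> = (\<forall>v\<in>A. v \<noteq> u \<longrightarrow> \<not> (min (\<pi> x) (\<pi> u) < \<pi> v \<and> \<pi> v < max (\<pi> x) (\<pi> u)))"

lemma EvG_swap:
  assumes "x \<notin> A" "u \<in> A" "v \<in> A"
  shows "EvG A x v (\<pi> \<circ> Transposition.transpose u v) = EvG A x u \<pi>"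
proof -
  let ?t = "Transposition.transpose u v"
  have tx: "?t x = x" using assms by (auto simp: Transposition.transpose_def)
  have tv: "?t v = u" by simp
  let ?P = "\<lambda>w. \<not> (min (\<pi> x) (\<pi> u) < \<pi> w \<and> \<pi> w < max (\<pi> x) (\<pi> u))"
  have "EvG A x v (\<pi> \<circ> ?t) = (\<forall>w\<in>A. w \<noteq> v \<longrightarrow> ?P (?t w))"
    unfolding EvG_def using tx tv by simp
  also have "\<dots> = (\<forall>w\<in>A. w \<noteq> u \<longrightarrow> ?P w)"
  proof
    assume H: "\<forall>w\<in>A. w \<noteq> v \<longrightarrow> ?P (?t w)"
    show "\<forall>w\<in>A. w \<noteq> u \<longrightarrow> ?P w"
    proof (intro ballI impI)
      fix w assume w: "w \<in> A" "w \<noteq> u"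
      have "?t w \<in> A" using w assms by (auto simp: Transposition.transpose_def)
      moreover have "?t w \<noteq> v" using w by (auto simp: Transposition.transpose_def)
      ultimately have "?P (?t (?t w))" using H by blast
      thus "?P w" by simp
    qed
  next
    assume H: "\<forall>w\<in>A. w \<noteq> u \<longrightarrow> ?P w"
    show "\<forall>w\<in>A. w \<noteq> v \<longrightarrow> ?P (?t w)"
    proof (intro ballI impI)
      fix w assume w: "w \<in> A" "w \<noteq> v"
      have "?t w \<in> A" using w assms by (auto simp: Transposition.transpose_def)
      moreover have "?t w \<noteq> u" using w by (auto simp: Transposition.transpose_def)
      ultimately show "?P (?t w)" using H by blast
    qed
  qed
  also have "\<dots> = EvG A x u \<pi>" unfolding EvG_def by simp
  finally show ?thesis .
qed

lemma EvG_card_eq: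
  assumes "A \<subseteq> K" "x \<notin> A" "u \<in> A" "v \<in> A"
  shows "card {\<pi>. \<pi> permutes K \<and> EvG A x v \<pi>} = card {\<pi>. \<pi> permutes K \<and> EvG A x u \<pi>}"
proof -
  let ?t = "Transposition.transpose u v"
  have tp: "?t permutes K" using assms by (intro permutes_swap_id) auto
  have tt: "\<pi> \<circ> ?t \<circ> ?t = \<pi>" for \<pi> :: "nat \<Rightarrow> nat" by (simp add: comp_assoc)
  have "bij_betw (\<lambda>\<pi>. \<pi> \<circ> ?t) {\<pi>. \<pi> permutes K \<and> EvG A x u \<pi>} {\<pi>. \<pi> permutes K \<and> EvG A x v \<pi>}"
  proof (rule bij_betw_byWitness[where f' = "\<lambda>\<pi>. \<pi> \<circ> ?t"])
    show "\<forall>a\<in>{\<pi>. \<pi> permutes K \<and> EvG A x u \<pi>}. a \<circ> ?t \<circ> ?t = a" using tt by blast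
    show "\<forall>a\<in>{\<pi>. \<pi> permutes K \<and> EvG A x v \<pi>}. a \<circ> ?t \<circ> ?t = a" using tt by blast
    show "(\<lambda>\<pi>. \<pi> \<circ> ?t) ` {\<pi>. \<pi> permutes K \<and> EvG A x u \<pi>} \<subseteq> {\<pi>. \<pi> permutes K \<and> EvG A x v \<pi>}"
      using EvG_swap[OF assms(2-4)] tp permutes_compose by blast
    show "(\<lambda>\<pi>. \<pi> \<circ> ?t) ` {\<pi>. \<pi> permutes K \<and> EvG A x v \<pi>} \<subseteq> {\<pi>. \<pi> permutes K \<and> EvG A x u \<pi>}"
    proof
      fix s assume "s \<in> (\<lambda>\<pi>. \<pi> \<circ> ?t) ` {\<pi>. \<pi> permutes K \<and> EvG A x v \<pi>}"
      then obtain \<pi> where p: "\<pi> permutes K" "EvG A x v \<pi>" "s = \<pi> \<circ> ?t" by auto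
      have "EvG A x v (s \<circ> ?t)" using p tt by simp
      hence "EvG A x u s" using EvG_swap[OF assms(2-4)] by simp
      thus "s \<in> {\<pi>. \<pi> permutes K \<and> EvG A x u \<pi>}" using p tp permutes_compose by blast
    qed
  qed
  thus ?thesis by (simp add: bij_betw_same_card)
qed

lemma EvG_le2:
  assumes "inj \<pi>" "x \<notin> A" "finite A"
  shows "card {v\<in>A. EvG A x v \<pi>} \<le> 2"
proof -
  let ?U = "{v\<in>A. EvG A x v \<pi> \<and> \<pi> x < \<pi> v}"
  let ?L = "{v\<in>A. EvG A x v \<pi> \<and> \<pi> v < \<pi> x}"
  have sub: "{v\<in>A. EvG A x v \<pi>} \<subseteq> ?U \<union> ?L"
  proof
    fix v assume v: "v \<in> {v\<in>A. EvG A x v \<pi>}"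
    hence "v \<noteq> x" using assms by auto
    hence "\<pi> v \<noteq> \<pi> x" using assms(1) by (auto dest: injD)
    thus "v \<in> ?U \<union> ?L" using v by auto
  qed
  have U: "card ?U \<le> 1"
  proof -
    have "\<forall>a\<in>?U. \<forall>b\<in>?U. a = b"
    proof (intro ballI, rule ccontr)
      fix a b assume a: "a \<in> ?U" and b: "b \<in> ?U" and ne: "a \<noteq> b"
      have ne': "\<pi> a \<noteq> \<pi> b" using ne assms(1) by (auto dest: injD)
      show False
      proof (cases "\<pi> a < \<pi> b")
        case True thus False using a b ne unfolding EvG_def by force
      next
        case False hence "\<pi> b < \<pi> a" using ne' by simp
        thus False using a b ne unfolding EvG_def by force
      qed
    qed
    thus ?thesis using assms(3) card_le_Suc0_iff_eq[of ?U] by auto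
  qed
  have L: "card ?L \<le> 1"
  proof -
    have "\<forall>a\<in>?L. \<forall>b\<in>?L. a = b"
    proof (intro ballI, rule ccontr)
      fix a b assume a: "a \<in> ?L" and b: "b \<in> ?L" and ne: "a \<noteq> b"
      have ne': "\<pi> a \<noteq> \<pi> b" using ne assms(1) by (auto dest: injD)
      show False
      proof (cases "\<pi> a < \<pi> b")
        case True thus False using a b ne unfolding EvG_def by force
      next
        case False hence "\<pi> b < \<pi> a" using ne' by simp
        thus False using a b ne unfolding EvG_def by force
      qed
    qed
    thus ?thesis using assms(3) card_le_Suc0_iff_eq[of ?L] by auto
  qed
  have "card {v\<in>A. EvG A x v \<pi>} \<le> card (?U \<union> ?L)" using sub assms(3) by (intro card_mono) auto
  also have "\<dots> \<le> card ?U + card ?L" by (rule card_Un_le)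
  finally show ?thesis using U L by simp
qed

lemma double_count:
  assumes "finite A" "finite P"
  shows "(\<Sum>v\<in>A. card {p\<in>P. E v p}) = (\<Sum>p\<in>P. card {v\<in>A. E v p})"
proof -
  have "(\<Sum>v\<in>A. card {p\<in>P. E v p}) = (\<Sum>v\<in>A. \<Sum>p\<in>P. if E v p then 1 else 0)"
    using assms by (simp add: sum.inter_filter[symmetric])
  also have "\<dots> = (\<Sum>p\<in>P. \<Sum>v\<in>A. if E v p then 1 else 0)" by (rule sum.swap)
  also have "\<dots> = (\<Sum>p\<in>P. card {v\<in>A. E v p})"
    using assms by (simp add: sum.inter_filter[symmetric])
  finally show ?thesis .
qed

lemma lemmaP:
  assumes "finite K" "A \<subseteq> K" "x \<notin> A" "u \<in> A"
  shows "card {\<pi>. \<pi> permutes K \<and> EvG A x u \<pi>} * card A \<le> 2 * card {\<pi>. \<pi> permutes K}"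
proof -
  let ?P = "{\<pi>. \<pi> permutes K}"
  have fA: "finite A" using assms finite_subset by blast
  have fP: "finite ?P" using assms finite_permutations by blast
  have "card {\<pi>. \<pi> permutes K \<and> EvG A x u \<pi>} * card A = (\<Sum>v\<in>A. card {\<pi>\<in>?P. EvG A x v \<pi>})"
    using EvG_card_eq[OF assms(2,3,4)] by simp
  also have "\<dots> = (\<Sum>\<pi>\<in>?P. card {v\<in>A. EvG A x v \<pi>})" by (rule double_count[OF fA fP])
  also have "\<dots> \<le> (\<Sum>\<pi>\<in>?P. 2)"
    by (rule sum_mono) (use EvG_le2 permutes_inj assms fA in blast)
  finally show ?thesis by simp
qed

definition tj :: "nat tree \<Rightarrow> nat list \<Rightarrow> nat \<Rightarrow> nat tree" where
  "tj T A j = foldl (\<lambda>t x. mtr x t) T (take j A)"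

definition prio :: "nat tree \<Rightarrow> nat list \<Rightarrow> nat \<Rightarrow> nat \<Rightarrow> int" where
  "prio T A j k = (if \<exists>i<j. A!i = k then int (Max {i. i<j \<and> A!i = k}) + 1 else - int (depth k T))"

lemma mtr_cost_sum: "mtr_cost T A = (\<Sum>j<length A. depth (A!j) (tj T A j) + 1)"
proof (induction A arbitrary: T)
  case Nil thus ?case by simp
next
  case (Cons x xs)
  have "(\<Sum>j<length (x#xs). depth ((x#xs)!j) (tj T (x#xs) j) + 1)
      = (depth ((x#xs)!0) (tj T (x#xs) 0) + 1) + (\<Sum>j<length xs. depth ((x#xs)!Suc j) (tj T (x#xs) (Suc j)) + 1)"
    unfolding length_Cons by (rule sum.lessThan_Suc_shift)
  also have "\<dots> = (depth x T + 1) + (\<Sum>j<length xs. depth (xs!j) (tj (mtr x T) xs j) + 1)"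
    by (simp add: tj_def)
  finally have "(\<Sum>j<length (x#xs). depth ((x#xs)!j) (tj T (x#xs) j) + 1)
      = (depth x T + 1) + (\<Sum>j<length xs. depth (xs!j) (tj (mtr x T) xs j) + 1)" .
  thus ?case using Cons by simp
qed

lemma tj_Suc: "j < length A \<Longrightarrow> tj T A (Suc j) = mtr (A!j) (tj T A j)"
  by (simp add: tj_def take_Suc_conv_app_nth)

lemma prio_Suc: "j < length A \<Longrightarrow> prio T A (Suc j) = (\<lambda>k. if k = A!j then int j + 1 else prio T A j k)"
proof (rule ext)
  fix k assume j: "j < length A"
  show "prio T A (Suc j) k = (if k = A!j then int j + 1 else prio T A j k)"
  proof (cases "k = A!j")
    case True
    have "Max {i. i<Suc j \<and> A!i = k} = j" using True by (intro Max_eqI) auto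
    thus ?thesis using True unfolding prio_def by auto
  next
    case False
    have "{i. i<Suc j \<and> A!i = k} = {i. i<j \<and> A!i = k}" using False less_Suc_eq by auto
    moreover have "(\<exists>i<Suc j. A!i = k) = (\<exists>i<j. A!i = k)" using False less_Suc_eq by auto
    ultimately show ?thesis using False unfolding prio_def by simp
  qed
qed

lemma prio_le: "prio T A j k \<le> int j"
proof (cases "\<exists>i<j. A!i = k")
  case True
  have "Max {i. i<j \<and> A!i = k} < j" using True by (subst Max_less_iff) auto
  hence "int (Suc (Max {i. i<j \<and> A!i = k})) \<le> int j" by simp
  moreover have "prio T A j k = int (Max {i. i<j \<and> A!i = k}) + 1" using True by (simp add: prio_def)
  ultimately show ?thesis by simp
qed (auto simp add: prio_def)

lemma invariant:
  assumes "bst T" "set A \<subseteq> set_tree T"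
  shows "j \<le> length A \<Longrightarrow> bst (tj T A j) \<and> set_tree (tj T A j) = set_tree T \<and> hp (prio T A j) (tj T A j)"
proof (induction j)
  case 0
  have "prio T A 0 = (\<lambda>k. - int (depth k T))" by (rule ext) (simp add: prio_def)
  thus ?case using assms hp_depth by (simp add: tj_def)
next
  case (Suc j)
  hence j: "j < length A" by simp
  with Suc have ih: "bst (tj T A j)" "set_tree (tj T A j) = set_tree T" "hp (prio T A j) (tj T A j)" by auto
  have x: "A!j \<in> set_tree (tj T A j)" using ih(2) assms(2) j nth_mem by blast
  have b: "\<forall>k\<in>set_tree (tj T A j). prio T A j k < int j + 1"
  proof
    fix k have "prio T A j k \<le> int j" by (rule prio_le)
    thus "prio T A j k < int j + 1" by linarith
  qed
  have "hp (\<lambda>k. if k = A!j then int j + 1 else prio T A j k) (mtr (A!j) (tj T A j))"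
    by (rule hp_mtr[OF ih(1) ih(3) x b])
  thus ?case using ih j x by (simp add: tj_Suc prio_Suc bst_mtr)
qed

definition lst :: "nat list \<Rightarrow> nat \<Rightarrow> nat \<Rightarrow> nat" where
  "lst S j u = Max {i. i<j \<and> S!i = u}"

definition W :: "nat list \<Rightarrow> nat \<Rightarrow> nat set" where
  "W S j = {u. \<exists>i<j. S!i = u \<and> u \<noteq> S!j \<and> (\<forall>i'<j. S!i' = S!j \<longrightarrow> i' < i)}"

definition R :: "nat list \<Rightarrow> nat \<Rightarrow> nat \<Rightarrow> nat set" where
  "R S j u = {v \<in> W S j. lst S j u \<le> lst S j v}"

definition Ev :: "nat list \<Rightarrow> nat \<Rightarrow> nat \<Rightarrow> (nat \<Rightarrow> nat) \<Rightarrow> bool" where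
  "Ev S j u \<pi> = EvG (R S j u) (S!j) u \<pi>"

lemma lst_props:
  assumes "\<exists>i<j. S!i = u"
  shows "lst S j u < j" "S ! lst S j u = u" "\<And>i. i < j \<Longrightarrow> S!i = u \<Longrightarrow> i \<le> lst S j u"
proof -
  have f: "finite {i. i<j \<and> S!i = u}" by auto
  have ne: "{i. i<j \<and> S!i = u} \<noteq> {}" using assms by auto
  have "lst S j u \<in> {i. i<j \<and> S!i = u}" unfolding lst_def using Max_in[OF f ne] .
  thus "lst S j u < j" "S ! lst S j u = u" by auto
  show "\<And>i. i < j \<Longrightarrow> S!i = u \<Longrightarrow> i \<le> lst S j u" unfolding lst_def using f by (intro Max_ge) auto
qed

lemma prio_pi:
  assumes "inj \<pi>" "j \<le> length S"
  shows "prio T (map \<pi> S) j (\<pi> u) = (if \<exists>i<j. S!i = u then int (lst S j u) + 1 else - int (depth (\<pi> u) T))"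
proof -
  have e: "\<And>i. i < j \<Longrightarrow> (map \<pi> S ! i = \<pi> u) = (S!i = u)" using assms by (auto dest: injD)
  hence "{i. i<j \<and> map \<pi> S ! i = \<pi> u} = {i. i<j \<and> S!i = u}" by auto
  moreover have "(\<exists>i<j. map \<pi> S ! i = \<pi> u) = (\<exists>i<j. S!i = u)" using e by auto
  ultimately show ?thesis unfolding prio_def lst_def by simp
qed

lemma prio_nonpos:
  "prio T A j k \<le> 0 \<Longrightarrow> prio T A j k = - int (depth k T)"
  unfolding prio_def by (auto split: if_splits)

lemma access_bound:
  assumes perm: "\<pi> permutes set_tree T" and bT: "bst T" and SK: "set S \<subseteq> set_tree T" and j: "j < length S"
  shows "depth (map \<pi> S ! j) (tj T (map \<pi> S) j)
     \<le> (if S!j \<in> set (take j S) then 0 else depth (\<pi> (S!j)) T) + card {u\<in>W S j. Ev S j u \<pi>}"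
proof -
  define K where "K = set_tree T"
  define A where "A = map \<pi> S"
  define x where "x = \<pi> (S!j)"
  define t where "t = tj T A j"
  define p where "p = prio T A j"
  have inj: "inj \<pi>" using perm by (rule permutes_inj)
  have piK: "\<And>v. \<pi> v \<in> K \<longleftrightarrow> v \<in> K" using perm unfolding K_def by (rule permutes_in_image)
  have AK: "set A \<subseteq> K" using SK piK unfolding A_def K_def by auto
  have inv: "bst t" "set_tree t = K" "hp p t"
    using invariant[OF bT AK[unfolded K_def], of j] j unfolding t_def p_def A_def K_def by auto
  have xK: "x \<in> K" using SK j piK unfolding x_def K_def by auto
  have Ax: "A ! j = x" unfolding A_def x_def using j by simp
  have dQ: "depth x t = card (Q p t x)" using depth_Q[OF inv(1,3)] xK inv(2) by simp
  have jl: "j \<le> length S" using j by simp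
  have pp: "\<And>u. p (\<pi> u) = (if \<exists>i<j. S!i = u then int (lst S j u) + 1 else - int (depth (\<pi> u) T))"
    unfolding p_def A_def using prio_pi[OF inj jl] by blast
  have fQ: "finite (Q p t x)" unfolding Q_def by auto
  define Q1 where "Q1 = {y\<in>Q p t x. p y \<le> 0}"
  define Q2 where "Q2 = {y\<in>Q p t x. 0 < p y}"
  have QQ: "Q p t x = Q1 \<union> Q2" unfolding Q1_def Q2_def by auto
  have Qmem: "\<And>y k. y \<in> Q p t x \<Longrightarrow> k \<in> K \<Longrightarrow> min x y \<le> k \<Longrightarrow> k \<le> max x y \<Longrightarrow> k \<noteq> y \<Longrightarrow> p k < p y"
    unfolding Q_def using inv(2) by auto
  have Qmem2: "\<And>y. y \<in> Q p t x \<Longrightarrow> y \<in> K \<and> y \<noteq> x"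
    unfolding Q_def using inv(2) by auto
  have xy: "\<And>y. y \<in> Q p t x \<Longrightarrow> p x < p y"
    using Qmem Qmem2 xK by force
  have c1: "card Q1 \<le> (if S!j \<in> set (take j S) then 0 else depth (\<pi> (S!j)) T)"
  proof (cases "S!j \<in> set (take j S)")
    case True
    then obtain i where i: "i < j" "S!i = S!j" using j by (auto simp: in_set_conv_nth)
    hence "p x > 0" using pp[of "S!j"] unfolding x_def by auto
    hence "Q1 = {}" using xy unfolding Q1_def by force
    thus ?thesis by simp
  next
    case False
    define p0 where "p0 = (\<lambda>k. - int (depth k T))"
    have "Q1 \<subseteq> Q p0 T x"
    proof
      fix y assume y: "y \<in> Q1"
      hence yQ: "y \<in> Q p t x" and py: "p y \<le> 0" unfolding Q1_def by auto
      have py0: "p y = p0 y" using py prio_nonpos unfolding p_def p0_def by blast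
      have "\<forall>k\<in>set_tree T. min x y \<le> k \<and> k \<le> max x y \<and> k \<noteq> y \<longrightarrow> p0 k < p0 y"
      proof (intro ballI impI)
        fix k assume k: "k \<in> set_tree T" "min x y \<le> k \<and> k \<le> max x y \<and> k \<noteq> y"
        have "p k < p y" using Qmem[OF yQ, of k] k unfolding K_def by auto
        hence "p k \<le> 0" using py by simp
        hence "p k = p0 k" using prio_nonpos unfolding p_def p0_def by blast
        thus "p0 k < p0 y" using \<open>p k < p y\<close> py0 by simp
      qed
      thus "y \<in> Q p0 T x" using Qmem2[OF yQ] unfolding Q_def K_def by auto
    qed
    hence "card Q1 \<le> card (Q p0 T x)" by (intro card_mono) (auto simp: Q_def)
    also have "\<dots> = depth x T" using depth_Q[OF bT hp_depth[OF bT], of x] xK unfolding p0_def K_def by simp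
    finally show ?thesis using False unfolding x_def by simp
  qed
  have c2: "card Q2 \<le> card {u\<in>W S j. Ev S j u \<pi>}"
  proof -
    have "Q2 \<subseteq> \<pi> ` {u\<in>W S j. Ev S j u \<pi>}"
    proof
      fix y assume y: "y \<in> Q2"
      hence yQ: "y \<in> Q p t x" and py: "0 < p y" unfolding Q2_def by auto
      have "\<exists>i<j. A!i = y"
      proof (rule ccontr)
        assume "\<not> (\<exists>i<j. A!i = y)"
        hence "p y = - int (depth y T)" unfolding p_def prio_def by simp
        thus False using py by simp
      qed
      then obtain i where i: "i < j" "A!i = y" by auto
      define u where "u = S!i"
      have yu: "y = \<pi> u" using i j unfolding u_def A_def by simp
      have ex: "\<exists>i<j. S!i = u" using i unfolding u_def by auto
      note L = lst_props[OF ex]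
      have pyu: "p y = int (lst S j u) + 1" using pp[of u] ex yu by simp
      have une: "u \<noteq> S!j" using Qmem2[OF yQ] yu unfolding x_def by auto
      have uW: "u \<in> W S j"
      proof -
        have "\<forall>i'<j. S!i' = S!j \<longrightarrow> i' < lst S j u"
        proof (intro allI impI)
          fix i' assume i': "i' < j" "S!i' = S!j"
          have ex': "\<exists>i<j. S!i = S!j" using i' by auto
          have "p x = int (lst S j (S!j)) + 1" using pp[of "S!j"] ex' unfolding x_def by simp
          moreover have "i' \<le> lst S j (S!j)" using lst_props(3)[OF ex' i'] .
          moreover have "p x < p y" using xy[OF yQ] .
          ultimately show "i' < lst S j u" using pyu by simp
        qed
        thus ?thesis unfolding W_def using L(1,2) une by blast
      qed
      have "Ev S j u \<pi>"
        unfolding Ev_def EvG_def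
      proof (intro ballI impI notI)
        fix v assume v: "v \<in> R S j u" "v \<noteq> u"
          and btw: "min (\<pi> (S!j)) (\<pi> u) < \<pi> v \<and> \<pi> v < max (\<pi> (S!j)) (\<pi> u)"
        have vW: "v \<in> W S j" and lv: "lst S j u \<le> lst S j v" using v unfolding R_def by auto
        then obtain i0 where i0: "i0 < j" "S!i0 = v" unfolding W_def by auto
        have exv: "\<exists>i<j. S!i = v" using i0 by auto
        have pv: "p (\<pi> v) = int (lst S j v) + 1" using pp[of v] exv by simp
        have vK: "\<pi> v \<in> K" using i0 j SK piK unfolding K_def by (metis nth_mem order.strict_trans subsetD)
        have "\<pi> v \<noteq> y" using v(2) yu inj by (auto dest: injD)
        hence "p (\<pi> v) < p y" using Qmem[OF yQ vK] btw yu unfolding x_def by auto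
        thus False using pv pyu lv by simp
      qed
      thus "y \<in> \<pi> ` {u\<in>W S j. Ev S j u \<pi>}" using uW yu by blast
    qed
    moreover have "finite {u\<in>W S j. Ev S j u \<pi>}"
    proof -
      have "W S j \<subseteq> set S" unfolding W_def using j by (auto intro!: nth_mem)
      thus ?thesis by (auto intro: finite_subset)
    qed
    ultimately show ?thesis by (meson card_image_le card_mono finite_imageI order_trans)
  qed
  have "depth (map \<pi> S ! j) (tj T (map \<pi> S) j) = card (Q1 \<union> Q2)"
    using dQ QQ Ax unfolding t_def A_def by simp
  also have "\<dots> \<le> card Q1 + card Q2" by (rule card_Un_le)
  finally show ?thesis using c1 c2 by linarith
qed

lemma rho_lt:
  assumes "1 \<le> i"
  shows "rho S J < i \<longleftrightarrow> (\<forall>k. 1 \<le> k \<and> k < J \<and> S!(k-1) = S!(J-1) \<longrightarrow> k < i)"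
proof (cases "\<exists>k. 1 \<le> k \<and> k < J \<and> S ! (k - 1) = S ! (J - 1)")
  case True
  have f: "finite {k. 1 \<le> k \<and> k < J \<and> S ! (k - 1) = S ! (J - 1)}" by auto
  have ne: "{k. 1 \<le> k \<and> k < J \<and> S ! (k - 1) = S ! (J - 1)} \<noteq> {}" using True by auto
  show ?thesis unfolding rho_def using True Max_less_iff[OF f ne] by auto
next
  case False
  thus ?thesis unfolding rho_def using assms by auto
qed

lemma ws_W:
  assumes "j < length S"
  shows "ws_set S (Suc j) = insert (S!j) (W S j)"
proof -
  have key: "\<And>i0. rho S (Suc j) < Suc i0 \<longleftrightarrow> (\<forall>k0<j. S!k0 = S!j \<longrightarrow> k0 < i0)"
  proof -
    fix i0
    have "rho S (Suc j) < Suc i0 \<longleftrightarrow> (\<forall>k. 1 \<le> k \<and> k < Suc j \<and> S!(k-1) = S!j \<longrightarrow> k < Suc i0)"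
      using rho_lt[of "Suc i0" S "Suc j"] by simp
    also have "\<dots> \<longleftrightarrow> (\<forall>k0<j. S!k0 = S!j \<longrightarrow> k0 < i0)"
    proof
      assume H: "\<forall>k. 1 \<le> k \<and> k < Suc j \<and> S!(k-1) = S!j \<longrightarrow> k < Suc i0"
      show "\<forall>k0<j. S!k0 = S!j \<longrightarrow> k0 < i0"
      proof (intro allI impI)
        fix k0 assume "k0 < j" "S!k0 = S!j"
        thus "k0 < i0" using H[rule_format, of "Suc k0"] by simp
      qed
    next
      assume H: "\<forall>k0<j. S!k0 = S!j \<longrightarrow> k0 < i0"
      show "\<forall>k. 1 \<le> k \<and> k < Suc j \<and> S!(k-1) = S!j \<longrightarrow> k < Suc i0"
      proof (intro allI impI)
        fix k assume k: "1 \<le> k \<and> k < Suc j \<and> S!(k-1) = S!j"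
        then obtain k0 where "k = Suc k0" by (cases k) auto
        thus "k < Suc i0" using H k by auto
      qed
    qed
    finally show "rho S (Suc j) < Suc i0 \<longleftrightarrow> (\<forall>k0<j. S!k0 = S!j \<longrightarrow> k0 < i0)" .
  qed
  show ?thesis
  proof (rule set_eqI, rule iffI)
    fix z assume "z \<in> ws_set S (Suc j)"
    then obtain i where i: "z = S!(i-1)" "rho S (Suc j) < i" "i \<le> Suc j" unfolding ws_set_def by auto
    then obtain i0 where i0: "i = Suc i0" by (cases i) auto
    have c: "\<forall>k0<j. S!k0 = S!j \<longrightarrow> k0 < i0" using key i(2) i0 by simp
    show "z \<in> insert (S!j) (W S j)"
    proof (cases "i0 = j")
      case True thus ?thesis using i i0 by simp
    next
      case False
      hence "i0 < j" using i i0 by simp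
      moreover hence "S!i0 \<noteq> S!j" using c by auto
      ultimately have "S!i0 \<in> W S j" unfolding W_def using c by blast
      thus ?thesis using i i0 by simp
    qed
  next
    fix z assume z: "z \<in> insert (S!j) (W S j)"
    show "z \<in> ws_set S (Suc j)"
    proof (cases "z = S!j")
      case True
      have "rho S (Suc j) < Suc j" using key[of j] by simp
      thus ?thesis unfolding ws_set_def using True by force
    next
      case False
      then obtain i where i: "i < j" "S!i = z" "\<forall>i'<j. S!i' = S!j \<longrightarrow> i' < i" using z unfolding W_def by auto
      have "rho S (Suc j) < Suc i" using key[of i] i by simp
      moreover have "z = S!(Suc i - 1)" using i by simp
      ultimately show ?thesis unfolding ws_set_def using i by force
    qed
  qed
qed

lemma W_sub: "j < length S \<Longrightarrow> W S j \<subseteq> set S"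
  unfolding W_def by (auto intro!: nth_mem)

lemma W_not: "S!j \<notin> W S j"
  unfolding W_def by auto

lemma card_ws: "j < length S \<Longrightarrow> card (ws_set S (Suc j)) = card (W S j) + 1"
proof -
  assume j: "j < length S"
  have "finite (W S j)" using W_sub[OF j] finite_subset by blast
  thus ?thesis using ws_W[OF j] W_not[of S j] by simp
qed

definition Hs :: "nat \<Rightarrow> real" where "Hs k = (\<Sum>i=1..k. 1 / real i)"

lemma Hs_ln: "1 \<le> k \<Longrightarrow> Hs k \<le> 1 + ln (real k)"
proof (induction k rule: dec_induct)
  case base thus ?case by (simp add: Hs_def)
next
  case (step n)
  have k: "real n \<ge> 1" using step by simp
  have "ln (real n / (real n + 1)) \<le> real n / (real n + 1) - 1"
    using k by (intro ln_le_minus_one) auto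
  also have "\<dots> = - (1 / (real n + 1))" using k by (simp add: field_simps)
  finally have "1 / (real n + 1) \<le> ln (real n + 1) - ln (real n)"
    using k by (simp add: ln_div)
  moreover have "Hs (Suc n) = Hs n + 1 / (real n + 1)" by (simp add: Hs_def add.commute)
  moreover have e: "real (Suc n) = real n + 1" by simp
  ultimately show ?case unfolding e using step.IH by linarith
qed

lemma Hs_log: "Hs k \<le> 1 + log 2 (real k + 1)"
proof (cases "k = 0")
  case True thus ?thesis by (simp add: Hs_def)
next
  case False
  hence "Hs k \<le> 1 + ln (real k)" using Hs_ln by simp
  also have "ln (real k) \<le> ln (real k + 1)" using False by simp
  also have "ln (real k + 1) \<le> log 2 (real k + 1)"
  proof -
    have l2: "0 < ln (2::real)" "ln (2::real) \<le> 1" using ln_le_minus_one[of 2] by auto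
    have "0 \<le> ln (real k + 1)" by simp
    hence "ln (real k + 1) * ln 2 \<le> ln (real k + 1)" using l2 by (simp add: mult_left_le)
    thus ?thesis using l2 by (simp add: log_def field_simps)
  qed
  finally show ?thesis by simp
qed

lemma R_sub: "R S j u \<subseteq> W S j" unfolding R_def by auto

lemma lst_inj:
  assumes "u1 \<in> W S j" "u2 \<in> W S j" "u1 \<noteq> u2"
  shows "lst S j u1 \<noteq> lst S j u2"
proof -
  have "\<exists>i<j. S!i = u1" "\<exists>i<j. S!i = u2" using assms unfolding W_def by auto
  thus ?thesis using lst_props(2) assms(3) by metis
qed

lemma harm_bound:
  assumes j: "j < length S"
  shows "(\<Sum>u\<in>W S j. 1 / real (card (R S j u))) \<le> Hs (card (W S j))"
proof -
  let ?r = "\<lambda>u. card (R S j u)"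
  have fW: "finite (W S j)" using W_sub[OF j] finite_subset by blast
  have fR: "\<And>u. finite (R S j u)" by (rule finite_subset[OF R_sub fW])
  have inj: "inj_on ?r (W S j)"
  proof (rule inj_onI, rule ccontr)
    fix u1 u2 assume u: "u1 \<in> W S j" "u2 \<in> W S j" "?r u1 = ?r u2" "u1 \<noteq> u2"
    have ne: "lst S j u1 \<noteq> lst S j u2" using lst_inj u by blast
    have gen: "\<And>a b. a \<in> W S j \<Longrightarrow> b \<in> W S j \<Longrightarrow> lst S j a < lst S j b \<Longrightarrow> ?r b < ?r a"
    proof -
      fix a b assume ab: "a \<in> W S j" "b \<in> W S j" "lst S j a < lst S j b"
      have "R S j b \<subset> R S j a"
      proof
        show "R S j b \<subseteq> R S j a" using ab unfolding R_def by auto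
        have "a \<in> R S j a" "a \<notin> R S j b" using ab unfolding R_def by auto
        thus "R S j b \<noteq> R S j a" by blast
      qed
      thus "?r b < ?r a" using fR by (intro psubset_card_mono) auto
    qed
    show False
    proof (cases "lst S j u1 < lst S j u2")
      case True thus False using gen[OF u(1,2)] u(3) by simp
    next
      case False hence "lst S j u2 < lst S j u1" using ne by simp
      thus False using gen[OF u(2,1)] u(3) by simp
    qed
  qed
  have img: "?r ` W S j \<subseteq> {1..card (W S j)}"
  proof
    fix i assume "i \<in> ?r ` W S j"
    then obtain u where u: "u \<in> W S j" "i = ?r u" by auto
    have "u \<in> R S j u" using u unfolding R_def by auto
    hence "1 \<le> ?r u" using fR card_gt_0_iff by (metis One_nat_def Suc_leI empty_iff)
    moreover have "?r u \<le> card (W S j)" using fW R_sub by (intro card_mono) auto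
    ultimately show "i \<in> {1..card (W S j)}" using u by simp
  qed
  have "(\<Sum>u\<in>W S j. 1 / real (?r u)) = (\<Sum>i\<in>?r ` W S j. 1 / real i)"
    using sum.reindex[OF inj, of "\<lambda>i. 1 / real i"] by simp
  also have "\<dots> \<le> (\<Sum>i\<in>{1..card (W S j)}. 1 / real i)"
    by (rule sum_mono2) (use img in auto)
  finally show ?thesis unfolding Hs_def .
qed

lemma first_bound:
  assumes perm: "\<pi> permutes K" and SK: "set S \<subseteq> K" and fK: "finite K"
  shows "(\<Sum>j<length S. (if S!j \<in> set (take j S) then 0 else depth (\<pi> (S!j)) T)) \<le> (\<Sum>i\<in>K. depth i T)"
proof -
  let ?F = "{j\<in>{..<length S}. S!j \<notin> set (take j S)}"
  let ?g = "\<lambda>j. \<pi> (S!j)"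
  have inj\<pi>: "inj \<pi>" using perm by (rule permutes_inj)
  have "(\<Sum>j<length S. (if S!j \<in> set (take j S) then 0 else depth (\<pi> (S!j)) T))
      = (\<Sum>j<length S. (if S!j \<notin> set (take j S) then depth (\<pi> (S!j)) T else 0))"
    by (rule sum.cong) auto
  also have "\<dots> = (\<Sum>j\<in>?F. depth (\<pi> (S!j)) T)"
    by (rule sum.inter_filter[symmetric]) simp
  also have inj: "inj_on ?g ?F"
  proof (rule inj_onI, rule ccontr)
    fix a b assume ab: "a \<in> ?F" "b \<in> ?F" "?g a = ?g b" "a \<noteq> b"
    have e: "S!a = S!b" using ab(3) inj\<pi> by (auto dest: injD)
    have gen: "\<And>a b. a \<in> ?F \<Longrightarrow> b \<in> ?F \<Longrightarrow> S!a = S!b \<Longrightarrow> a < b \<Longrightarrow> False"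
    proof -
      fix a b assume ab: "a \<in> ?F" "b \<in> ?F" "S!a = S!b" "a < b"
      have "take b S ! a = S!a" "a < length (take b S)" using ab by auto
      hence "S!a \<in> set (take b S)" by (metis nth_mem)
      thus False using ab by auto
    qed
    show False using gen[OF ab(1,2) e] gen[OF ab(2,1) e[symmetric]] ab(4) by linarith
  qed
  hence "(\<Sum>j\<in>?F. depth (\<pi> (S!j)) T) = (\<Sum>i\<in>?g ` ?F. depth i T)"
    using sum.reindex[OF inj, of "\<lambda>i. depth i T"] by simp
  also have "\<dots> \<le> (\<Sum>i\<in>K. depth i T)"
  proof (rule sum_mono2[OF fK])
    show "?g ` ?F \<subseteq> K"
    proof
      fix y assume "y \<in> ?g ` ?F"
      then obtain j where "j < length S" "y = \<pi> (S!j)" by auto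
      moreover hence "S!j \<in> K" using SK nth_mem by blast
      ultimately show "y \<in> K" using perm by (simp add: permutes_in_image)
    qed
  qed auto
  finally show ?thesis .
qed

lemma cost_bound:
  assumes perm: "\<pi> permutes set_tree T" and bT: "bst T" and SK: "set S \<subseteq> set_tree T"
  shows "mtr_cost T (map \<pi> S) \<le> length S + (\<Sum>i\<in>set_tree T. depth i T) + (\<Sum>j<length S. card {u\<in>W S j. Ev S j u \<pi>})"
proof -
  have "mtr_cost T (map \<pi> S) = (\<Sum>j<length S. depth (map \<pi> S ! j) (tj T (map \<pi> S) j) + 1)"
    using mtr_cost_sum[of T "map \<pi> S"] by simp
  also have "\<dots> \<le> (\<Sum>j<length S. ((if S!j \<in> set (take j S) then 0 else depth (\<pi> (S!j)) T) + card {u\<in>W S j. Ev S j u \<pi>}) + 1)"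
    by (rule sum_mono) (use access_bound[OF perm bT SK] in auto)
  also have "\<dots> = (\<Sum>j<length S. (if S!j \<in> set (take j S) then 0 else depth (\<pi> (S!j)) T)) + (\<Sum>j<length S. card {u\<in>W S j. Ev S j u \<pi>}) + length S"
    by (simp only: sum.distrib) simp
  also have "\<dots> \<le> (\<Sum>i\<in>set_tree T. depth i T) + (\<Sum>j<length S. card {u\<in>W S j. Ev S j u \<pi>}) + length S"
    using first_bound[OF perm SK] by simp
  finally show ?thesis by simp
qed

lemma per_u:
  assumes fK: "finite K" and SK: "set S \<subseteq> K" and j: "j < length S" and u: "u \<in> W S j"
  shows "real (card {\<pi>\<in>{\<pi>. \<pi> permutes K}. Ev S j u \<pi>}) \<le> 2 * real (card {\<pi>. \<pi> permutes K}) / real (card (R S j u))"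
proof -
  have RK: "R S j u \<subseteq> K" using R_sub W_sub[OF j] SK by blast
  have xR: "S!j \<notin> R S j u" using R_sub W_not by blast
  have uR: "u \<in> R S j u" using u unfolding R_def by auto
  have fR: "finite (R S j u)" using RK fK finite_subset by blast
  have pos: "0 < card (R S j u)" using uR fR card_gt_0_iff by blast
  have "card {\<pi>. \<pi> permutes K \<and> EvG (R S j u) (S!j) u \<pi>} * card (R S j u) \<le> 2 * card {\<pi>. \<pi> permutes K}"
    by (rule lemmaP[OF fK RK xR uR])
  moreover have "{\<pi>\<in>{\<pi>. \<pi> permutes K}. Ev S j u \<pi>} = {\<pi>. \<pi> permutes K \<and> EvG (R S j u) (S!j) u \<pi>}"
    unfolding Ev_def by auto
  ultimately have "card {\<pi>\<in>{\<pi>. \<pi> permutes K}. Ev S j u \<pi>} * card (R S j u) \<le> 2 * card {\<pi>. \<pi> permutes K}"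
    by simp
  hence "real (card {\<pi>\<in>{\<pi>. \<pi> permutes K}. Ev S j u \<pi>} * card (R S j u)) \<le> real (2 * card {\<pi>. \<pi> permutes K})"
    by (rule of_nat_mono)
  hence "real (card {\<pi>\<in>{\<pi>. \<pi> permutes K}. Ev S j u \<pi>}) * real (card (R S j u)) \<le> 2 * real (card {\<pi>. \<pi> permutes K})"
    by simp
  thus ?thesis using pos by (simp add: field_simps)
qed

lemma per_j:
  assumes fK: "finite K" and SK: "set S \<subseteq> K" and j: "j < length S"
  shows "(\<Sum>u\<in>W S j. real (card {\<pi>\<in>{\<pi>. \<pi> permutes K}. Ev S j u \<pi>}))
     \<le> 2 * real (card {\<pi>. \<pi> permutes K}) * (1 + log 2 (real (card (ws_set S (Suc j)))))"
proof -
  let ?N = "real (card {\<pi>. \<pi> permutes K})"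
  have "(\<Sum>u\<in>W S j. real (card {\<pi>\<in>{\<pi>. \<pi> permutes K}. Ev S j u \<pi>})) \<le> (\<Sum>u\<in>W S j. 2 * ?N / real (card (R S j u)))"
    by (rule sum_mono) (rule per_u[OF fK SK j])
  also have "\<dots> = 2 * ?N * (\<Sum>u\<in>W S j. 1 / real (card (R S j u)))"
    by (simp add: sum_distrib_left)
  also have "\<dots> \<le> 2 * ?N * Hs (card (W S j))"
    by (rule mult_left_mono[OF harm_bound[OF j]]) simp
  also have "\<dots> \<le> 2 * ?N * (1 + log 2 (real (card (W S j)) + 1))"
    by (rule mult_left_mono[OF Hs_log]) simp
  also have "real (card (W S j)) + 1 = real (card (ws_set S (Suc j)))"
    using card_ws[OF j] by simp
  finally show ?thesis .
qed

theorem mainTheorem9: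
  "\<exists>c::real. c > 0 \<and>
     (\<forall>n m (S::nat list) (T::nat tree).
        n \<ge> 1 \<longrightarrow> m \<ge> 1 \<longrightarrow> length S = m \<longrightarrow> set S \<subseteq> {1..n} \<longrightarrow>
        bst T \<longrightarrow> set_tree T = {1..n} \<longrightarrow>
        expected_mtr n T S \<le> c * (WS S + real m + (\<Sum>i = 1..n. real (depth i T))))"
proof (intro exI[of _ 3] conjI allI impI)
  fix n m :: nat and S :: "nat list" and T :: "nat tree"
  assume n: "n \<ge> 1" and m: "m \<ge> 1" and len: "length S = m" and SK: "set S \<subseteq> {1..n}"
    and bT: "bst T" and TK: "set_tree T = {1..n}"
  define K where "K = {1..n}"
  define P where "P = {\<pi>. \<pi> permutes K}"
  define N where "N = real (card P)"
  define D where "D = (\<Sum>i = 1..n. real (depth i T))"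
  have fK: "finite K" unfolding K_def by simp
  have fP: "finite P" unfolding P_def using finite_permutations[OF fK] .
  have Npos: "N > 0" unfolding N_def P_def using card_permutations[OF refl fK] by simp
  have SK': "set S \<subseteq> K" using SK unfolding K_def .
  have TK': "set_tree T = K" using TK unfolding K_def .
  have Dnat: "real (\<Sum>i\<in>set_tree T. depth i T) = D" unfolding D_def TK by simp
  have D0: "D \<ge> 0" unfolding D_def by (simp add: sum_nonneg)
  let ?c = "\<lambda>j \<pi>. card {u\<in>W S j. Ev S j u \<pi>}"
  have WSeq: "WS S = (\<Sum>j<m. log 2 (real (card (ws_set S (Suc j)))))"
    unfolding WS_def len by (simp add: sum.atLeast1_atMost_eq)
  have WS0: "WS S \<ge> 0"
    unfolding WS_def
  proof (rule sum_nonneg)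
    fix j assume "j \<in> {1..length S}"
    then obtain j0 where j0: "j = Suc j0" "j0 < length S" by (cases j) auto
    have "card (ws_set S j) \<ge> 1" using card_ws[OF j0(2)] j0(1) by simp
    thus "0 \<le> log 2 (real (card (ws_set S j)))" by simp
  qed
  have step1: "(\<Sum>\<pi>\<in>P. real (mtr_cost T (map \<pi> S))) \<le> (\<Sum>\<pi>\<in>P. real m + D + (\<Sum>j<m. real (?c j \<pi>)))"
  proof (rule sum_mono)
    fix \<pi> assume "\<pi> \<in> P"
    hence perm: "\<pi> permutes set_tree T" unfolding P_def TK' by simp
    have "mtr_cost T (map \<pi> S) \<le> length S + (\<Sum>i\<in>set_tree T. depth i T) + (\<Sum>j<length S. ?c j \<pi>)"
      by (rule cost_bound[OF perm bT]) (use SK' TK' in simp)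
    hence "real (mtr_cost T (map \<pi> S)) \<le> real (length S + (\<Sum>i\<in>set_tree T. depth i T) + (\<Sum>j<length S. ?c j \<pi>))"
      by (rule of_nat_mono)
    thus "real (mtr_cost T (map \<pi> S)) \<le> real m + D + (\<Sum>j<m. real (?c j \<pi>))"
      using Dnat len by simp
  qed
  also have "\<dots> = N * (real m + D) + (\<Sum>j<m. \<Sum>\<pi>\<in>P. real (?c j \<pi>))"
  proof -
    have a: "(\<Sum>\<pi>\<in>P. real m + D + (\<Sum>j<m. real (?c j \<pi>))) = (\<Sum>\<pi>\<in>P. real m + D) + (\<Sum>\<pi>\<in>P. (\<Sum>j<m. real (?c j \<pi>)))"
      by (rule sum.distrib)
    have b: "(\<Sum>\<pi>\<in>P. real m + D) = N * (real m + D)" unfolding N_def by simp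
    have c: "(\<Sum>\<pi>\<in>P. (\<Sum>j<m. real (?c j \<pi>))) = (\<Sum>j<m. \<Sum>\<pi>\<in>P. real (?c j \<pi>))"
      by (rule sum.swap)
    show ?thesis unfolding a b c ..
  qed
  also have "\<dots> \<le> N * (real m + D) + (\<Sum>j<m. 2 * N * (1 + log 2 (real (card (ws_set S (Suc j))))))"
  proof -
    have "(\<Sum>\<pi>\<in>P. real (?c j \<pi>)) \<le> 2 * N * (1 + log 2 (real (card (ws_set S (Suc j)))))" if j: "j < m" for j
    proof -
      have jl: "j < length S" using j len by simp
      have fW: "finite (W S j)" using W_sub[OF jl] finite_subset by blast
      have "(\<Sum>\<pi>\<in>P. ?c j \<pi>) = (\<Sum>u\<in>W S j. card {\<pi>\<in>P. Ev S j u \<pi>})"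
        using double_count[OF fW fP, of "\<lambda>u \<pi>. Ev S j u \<pi>"] by simp
      hence "(\<Sum>\<pi>\<in>P. real (?c j \<pi>)) = (\<Sum>u\<in>W S j. real (card {\<pi>\<in>P. Ev S j u \<pi>}))"
        by (simp only: of_nat_sum[symmetric])
      also have "\<dots> \<le> 2 * N * (1 + log 2 (real (card (ws_set S (Suc j)))))"
        using per_j[OF fK SK' jl] unfolding N_def P_def .
      finally show ?thesis .
    qed
    thus ?thesis by (intro add_left_mono sum_mono) auto
  qed
  also have "\<dots> = N * (real m + D) + 2 * N * real m + 2 * N * WS S"
    unfolding WSeq by (simp add: sum.distrib sum_distrib_left algebra_simps)
  finally have tot: "(\<Sum>\<pi>\<in>P. real (mtr_cost T (map \<pi> S))) \<le> N * (3 * real m + D + 2 * WS S)"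
    by (simp add: algebra_simps)
  have "expected_mtr n T S = (\<Sum>\<pi>\<in>P. real (mtr_cost T (map \<pi> S))) / N"
    unfolding expected_mtr_def P_def N_def K_def by simp
  also have "\<dots> \<le> 3 * real m + D + 2 * WS S"
    using tot Npos by (simp add: divide_le_eq mult.commute)
  also have "\<dots> \<le> 3 * (WS S + real m + D)" using WS0 D0 by simp
  finally show "expected_mtr n T S \<le> 3 * (WS S + real m + (\<Sum>i = 1..n. real (depth i T)))"
    unfolding D_def .
qed simp

end
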